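(* Let $f=1-xy$, $g=1-xy^2$, $h=1-y$ in $\mathbb{Z}[x,y]$. There exist polynomials $\xi_m\in\mathbb{Z}[x,y]$ for all integers $m\geq1$ such that (1) (a) $\xi_1=g$; (b) $\xi_{m+1}=f\xi_m+x^mh^{m+1}$; (c) $\xi_{m+1}=xh\xi_m+f^{m+1}$; (2) $\xi_m$ vanishes to order $m$ at $t_0=(1,1)$; (3) the Newton polygon of $\xi_m$ is the triangle with vertices $(0,0)$, $(m-1,0)$, $(m,m+1)$; (4) $\xi_m$ is irreducible in $K[x,y]$ for every field $K$.
   Context: The Newton polygon of a polynomial is the convex hull of the exponent vectors of the monomials appearing with nonzero coefficient. *)

theory Defs
  imports "HOL-Analysis.Analysis" "HOL-Computational_Algebra.Polynomial"
begin

text \<open>Bivariate polynomials R[x,y] are represented as R[x][y], i.e. as 'a poly poly: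
  coeff (coeff p j) i is the coefficient of the monomial x^i y^j.\<close>

definition varX :: "'a::comm_ring_1 poly poly" where
  "varX = [:[:0, 1:]:]"

definition varY :: "'a::comm_ring_1 poly poly" where
  "varY = [:0, 1:]"

definition support2 :: "'a::zero poly poly \<Rightarrow> (nat \<times> nat) set" where
  "support2 p = {(i, j). coeff (coeff p j) i \<noteq> 0}"

definition newton_polygon :: "'a::zero poly poly \<Rightarrow> (real \<times> real) set" where
  "newton_polygon p = convex hull ((\<lambda>(i, j). (real i, real j)) ` support2 p)"

text \<open>Translate the point (a,b) to the origin: p(x+a, y+b).\<close>
definition shift2 :: "'a::comm_ring_1 \<Rightarrow> 'a \<Rightarrow> 'a poly poly \<Rightarrow> 'a poly poly" where
  "shift2 a b p = pcompose (map_poly (\<lambda>c. pcompose c [:a, 1:]) p) [:[:b:], 1:]"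

definition vanishes_to_order :: "'a::comm_ring_1 poly poly \<Rightarrow> 'a \<Rightarrow> 'a \<Rightarrow> nat \<Rightarrow> bool" where
  "vanishes_to_order p a b m \<longleftrightarrow>
     (\<forall>(i, j) \<in> support2 (shift2 a b p). m \<le> i + j) \<and>
     (\<exists>(i, j) \<in> support2 (shift2 a b p). i + j = m)"

end

theory Submission
  imports Defs
begin


lemma gp_aux: fixes X :: "'a::comm_ring_1"
  shows "j \<le> m \<Longrightarrow> (1-X) * (\<Sum>i=j..<m. X^i) = X^j - X^m"
proof (induction m)
  case 0 then show ?case by simp
next
  case (Suc m)
  show ?case
  proof (cases "j = Suc m")
    case True then show ?thesis by simp
  next
    case False
    then have "j \<le> m" using Suc by simp
    then have "(\<Sum>i=j..<Suc m. X^i) = (\<Sum>i=j..<m. X^i) + X^m" by simp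
    then have "(1-X) * (\<Sum>i=j..<Suc m. X^i) = (1-X)*(\<Sum>i=j..<m. X^i) + (1-X)*X^m"
      by (simp only: distrib_left)
    also have "\<dots> = X^j - X^m + (1-X)*X^m" using Suc.IH[OF \<open>j \<le> m\<close>] by simp
    also have "\<dots> = X^j - X^Suc m" by (simp add: algebra_simps)
    finally show ?thesis .
  qed
qed

lemma binom_neg: fixes a :: "'a::comm_ring_1"
  shows "(1 - a)^n = (\<Sum>k\<le>n. of_int ((-1)^k * int (n choose k)) * a^k)"
proof -
  have "(1 - a)^n = ((-a) + 1)^n" by simp
  also have "\<dots> = (\<Sum>k\<le>n. of_nat (n choose k) * (-a)^k * 1^(n-k))" by (rule binomial_ring)
  also have "\<dots> = (\<Sum>k\<le>n. of_int ((-1)^k * int (n choose k)) * a^k)"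
    by (rule sum.cong) (simp_all add: power_minus[of a] mult_ac)
  finally show ?thesis .
qed

lemma E_gen: fixes X Y :: "'a::comm_ring_1"
 shows "(1-X) * ((\<Sum>j<m. of_int ((-1)^j * int (Suc m choose j)) * (\<Sum>i=j..<m. X^i) * Y^j) + (-1)^m * X^m * Y^(Suc m))
   = (1 - X*Y)^(Suc m) - X^m*(1-Y)^(Suc m)"
proof -
  define c where "c j = (of_int ((-1)^j * int (Suc m choose j)) :: 'a)" for j
  have L: "(1-X) * ((\<Sum>j<m. c j * (\<Sum>i=j..<m. X^i) * Y^j) + (-1)^m * X^m * Y^(Suc m))
     = (\<Sum>j<m. c j * (X^j - X^m) * Y^j) + (-1)^m * (1-X) * X^m * Y^(Suc m)"
    by (simp add: algebra_simps sum_distrib_left gp_aux[symmetric] sum_distrib_right)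
  have R: "(1 - X*Y)^(Suc m) - X^m*(1-Y)^(Suc m) = (\<Sum>j\<le>Suc m. c j * (X^j - X^m) * Y^j)"
    unfolding binom_neg c_def
    by (simp add: sum_distrib_left algebra_simps sum_subtractf power_mult_distrib)
  have cm: "c (Suc m) = (-1)^(Suc m)" by (simp add: c_def)
  have R2: "(\<Sum>j\<le>Suc m. c j * (X^j - X^m) * Y^j) = (\<Sum>j<m. c j * (X^j - X^m) * Y^j) + (-1)^m * (1-X) * X^m * Y^(Suc m)"
  proof -
    have "(\<Sum>j\<le>Suc m. c j * (X^j - X^m) * Y^j) = (\<Sum>j<Suc (Suc m). c j * (X^j - X^m) * Y^j)"
      by (simp only: lessThan_Suc_atMost)
    also have "\<dots> = (\<Sum>j<m. c j * (X^j - X^m) * Y^j) + c m * (X^m - X^m) * Y^m + c (Suc m) * (X^Suc m - X^m) * Y^Suc m"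
      by (simp only: sum.lessThan_Suc)
    also have "c (Suc m) * (X^Suc m - X^m) * Y^Suc m = (-1)^m * (1-X) * X^m * Y^(Suc m)"
      unfolding cm by (simp add: algebra_simps)
    finally show ?thesis by simp
  qed
  have "(1-X) * ((\<Sum>j<m. c j * (\<Sum>i=j..<m. X^i) * Y^j) + (-1)^m * X^m * Y^(Suc m))
     = (1 - X*Y)^(Suc m) - X^m*(1-Y)^(Suc m)"
    using L R R2 by (simp only:)
  then show ?thesis unfolding c_def .
qed



definition cc :: "nat \<Rightarrow> nat \<Rightarrow> nat \<Rightarrow> int" where
 "cc m i j = (if j \<le> i \<and> i < m then (-1)^j * int (Suc m choose j)
             else if i = m \<and> j = Suc m then (-1)^m else 0)"

definition xi :: "nat \<Rightarrow> int poly poly" where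
 "xi m = (\<Sum>j<m. of_int ((-1)^j * int (Suc m choose j)) * (\<Sum>i=j..<m. varX^i) * varY^j)
          + (-1)^m * varX^m * varY^(Suc m)"

lemma varX_pow: "(varX :: 'a::comm_ring_1 poly poly)^i = monom (monom 1 i) 0"
  by (induction i) (auto simp: varX_def mult_monom monom_0 one_pCons monom_Suc)

lemma varY_pow: "(varY :: 'a::comm_ring_1 poly poly)^j = monom 1 j"
proof -
  have "(varY :: 'a::comm_ring_1 poly poly) = monom 1 1" by (simp add: varY_def monom_Suc monom_0 one_pCons)
  then have "(varY :: 'a::comm_ring_1 poly poly)^j = (monom 1 1)^j" by (simp only:)
  also have "\<dots> = monom 1 j" by (simp only: monom_power power_one mult_1)
  finally show ?thesis .
qed

lemma XY_mono: "of_int c * (varX :: 'a::comm_ring_1 poly poly)^i * varY^j = monom (monom (of_int c) i) j"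
  by (simp add: varX_pow varY_pow of_int_poly mult_monom smult_monom monom_0[symmetric])

lemma xi_alt: "xi m = (\<Sum>j<m. \<Sum>i=j..<m. monom (monom ((-1)^j * int (Suc m choose j)) i) j)
          + monom (monom ((-1)^m) m) (Suc m)"
proof -
  have a: "of_int c * (\<Sum>i=j..<m. (varX :: int poly poly)^i) * varY^j = (\<Sum>i=j..<m. monom (monom c i) j)" for c j
    using XY_mono[of c _ j, where 'a=int]
    by (simp add: sum_distrib_left sum_distrib_right)
  have b: "(-1)^m * (varX :: int poly poly)^m * varY^(Suc m) = monom (monom ((-1)^m) m) (Suc m)"
    using XY_mono[of "(-1)^m" m "Suc m", where 'a=int] by simp
  show ?thesis unfolding xi_def a b ..
qed

lemma coeff_xi: "coeff (coeff (xi m) j) i = cc m i j"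
proof -
  define c where "c j = (-1)^j * int (Suc m choose j)" for j
  have xa: "xi m = (\<Sum>j'<m. monom (\<Sum>i'=j'..<m. monom (c j') i') j') + monom (monom ((-1)^m) m) (Suc m)"
    unfolding xi_alt c_def by (simp add: monom_sum)
  have 1: "coeff (\<Sum>j'<m. monom (\<Sum>i'=j'..<m. monom (c j') i') j') j
       = (if j < m then (\<Sum>i'=j..<m. monom (c j) i') else 0)"
    unfolding coeff_sum coeff_monom by (simp add: sum.delta)
  have 2: "coeff (\<Sum>i'=j..<m. monom (c j) i') i = (if j \<le> i \<and> i < m then c j else 0)"
    unfolding coeff_sum coeff_monom by (simp add: sum.delta)
  show ?thesis unfolding xa coeff_add 1 cc_def c_def[symmetric]
    by (auto simp: 2 coeff_monom)
qed

lemma E_xi: "(1 - varX) * xi m = (1 - varX * varY)^(Suc m) - varX^m*(1-varY)^(Suc m)"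
  unfolding xi_def by (rule E_gen)



definition phi1 :: "int poly \<Rightarrow> int poly" where "phi1 c = pcompose c [:1, 1:]"

lemma phi1_simps: "phi1 0 = 0" "phi1 1 = 1" "phi1 (a + b) = phi1 a + phi1 b"
  "phi1 (a * b) = phi1 a * phi1 b" "phi1 (- a) = - phi1 a" "phi1 (a - b) = phi1 a - phi1 b"
  by (simp_all add: phi1_def pcompose_1 pcompose_add pcompose_mult pcompose_uminus pcompose_diff)

lemma mp_add: "map_poly phi1 (p + q) = map_poly phi1 p + map_poly phi1 q"
  by (rule poly_eqI) (simp add: coeff_map_poly phi1_simps)

lemma mp_diff: "map_poly phi1 (p - q) = map_poly phi1 p - map_poly phi1 q"
  by (rule poly_eqI) (simp add: coeff_map_poly phi1_simps)

lemma phi1_sum: "phi1 (sum g A) = (\<Sum>x\<in>A. phi1 (g x))"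
  using sum_comp_morphism[of phi1 g A] by (simp add: phi1_simps o_def)

lemma mp_mult: "map_poly phi1 (p * q) = map_poly phi1 p * map_poly phi1 q"
  by (rule poly_eqI) (simp add: coeff_map_poly phi1_simps coeff_mult phi1_sum)

lemma mp_1: "map_poly phi1 1 = 1"
  by (simp add: phi1_simps)

abbreviation sh :: "int poly poly \<Rightarrow> int poly poly" where "sh \<equiv> shift2 1 1"

lemma sh_def': "sh p = pcompose (map_poly phi1 p) [:[:1:], 1:]"
  unfolding shift2_def phi1_def by simp

lemma sh_mult: "sh (p * q) = sh p * sh q"
  unfolding sh_def' mp_mult pcompose_mult ..

lemma sh_diff: "sh (p - q) = sh p - sh q"
  unfolding sh_def' mp_diff pcompose_diff ..

lemma sh_add: "sh (p + q) = sh p + sh q"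
  unfolding sh_def' mp_add pcompose_add ..

lemma sh_1: "sh 1 = 1"
  unfolding sh_def' mp_1 pcompose_1 ..

lemma sh_pow: "sh (p ^ n) = sh p ^ n"
  by (induction n) (simp_all add: sh_1 sh_mult)

lemma sh_X: "sh varX = varX + 1"
proof -
  have "map_poly phi1 varX = [:[:1,1:]:]"
    by (simp add: varX_def phi1_def map_poly_pCons pcompose_pCons)
  then show ?thesis unfolding sh_def' by (simp add: varX_def one_pCons)
qed

lemma sh_Y: "sh varY = varY + 1"
proof -
  have "map_poly phi1 varY = [:0,1:]"
    by (simp add: varY_def phi1_simps map_poly_pCons)
  then show ?thesis unfolding sh_def' by (simp add: varY_def one_pCons pcompose_pCons)
qed

definition LD :: "nat \<Rightarrow> 'a::comm_ring_1 poly poly \<Rightarrow> bool" where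
  "LD d p \<longleftrightarrow> (\<forall>i j. coeff (coeff p j) i \<noteq> 0 \<longrightarrow> d \<le> i + j)"

lemma LD_0: "LD 0 p" by (simp add: LD_def)

lemma LD_mono: "LD d p \<Longrightarrow> e \<le> d \<Longrightarrow> LD e p"
  unfolding LD_def by force

lemma LD_add: "LD d p \<Longrightarrow> LD d q \<Longrightarrow> LD d (p + q)"
  unfolding LD_def by (metis add.right_neutral coeff_add)

lemma LD_uminus: "LD d p \<Longrightarrow> LD d (- p)"
  unfolding LD_def by simp

lemma LD_diff: "LD d p \<Longrightarrow> LD d q \<Longrightarrow> LD d (p - q)"
  using LD_add[of d p "-q"] LD_uminus[of d q] by simp

lemma LD_mult: "LD d1 p \<Longrightarrow> LD d2 q \<Longrightarrow> LD (d1 + d2) (p * q)"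
proof (unfold LD_def, intro allI impI)
  fix i j
  assume p: "\<forall>i j. coeff (coeff p j) i \<noteq> 0 \<longrightarrow> d1 \<le> i + j"
    and q: "\<forall>i j. coeff (coeff q j) i \<noteq> 0 \<longrightarrow> d2 \<le> i + j"
    and nz: "coeff (coeff (p * q) j) i \<noteq> 0"
  have "coeff (coeff (p * q) j) i = (\<Sum>k\<le>j. \<Sum>l\<le>i. coeff (coeff p k) l * coeff (coeff q (j - k)) (i - l))"
    by (simp add: coeff_mult coeff_sum)
  with nz obtain k where k: "k \<le> j" "(\<Sum>l\<le>i. coeff (coeff p k) l * coeff (coeff q (j - k)) (i - l)) \<noteq> 0"
    by (metis (no_types, lifting) atMost_iff sum.neutral)
  then obtain l where l: "l \<le> i" "coeff (coeff p k) l * coeff (coeff q (j - k)) (i - l) \<noteq> 0"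
    by (metis (no_types, lifting) atMost_iff sum.neutral)
  from l(2) have n1: "coeff (coeff p k) l \<noteq> 0" and n2: "coeff (coeff q (j - k)) (i - l) \<noteq> 0" by auto
  have "d1 \<le> l + k" using p n1 by blast
  moreover have "d2 \<le> (i - l) + (j - k)" using q n2 by blast
  ultimately show "d1 + d2 \<le> i + j" using k l by linarith
qed

lemma LD_pow: "LD d p \<Longrightarrow> LD (n * d) (p ^ n)"
proof (induction n)
  case 0 then show ?case by (simp add: LD_0)
next
  case (Suc n) then show ?case using LD_mult[of d p "n * d" "p ^ n"] by (simp add: add.commute)
qed

lemma LD_X: "LD 1 (varX :: 'a::comm_ring_1 poly poly)"
  unfolding LD_def varX_def by (auto simp: coeff_pCons split: nat.splits)

lemma LD_Y: "LD 1 (varY :: 'a::comm_ring_1 poly poly)"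
  unfolding LD_def varY_def by (auto simp: coeff_pCons split: nat.splits)

lemma coeff_X_mult: "coeff (coeff ((varX :: 'a::comm_ring_1 poly poly) * S) j) (Suc i) = coeff (coeff S j) i"
  by (simp add: varX_def)

lemma sh_E: "- (varX * sh (xi m)) = (- (varX + varY + varX * varY))^(Suc m) - (varX + 1)^m * (- varY)^(Suc m)"
proof -
  have "sh ((1 - varX) * xi m) = sh ((1 - varX * varY)^(Suc m) - varX^m*(1-varY)^(Suc m))"
    using E_xi by simp
  then have "(1 - (varX + 1)) * sh (xi m) = (1 - (varX + 1) * (varY + 1))^(Suc m) - (varX + 1)^m*(1-(varY + 1))^(Suc m)"
    by (simp only: sh_mult sh_diff sh_pow sh_1 sh_X sh_Y)
  moreover have "1 - (varX + 1) * (varY + 1) = - (varX + varY + varX * (varY :: int poly poly))"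
    by (simp add: algebra_simps)
  ultimately show ?thesis by simp
qed

lemma LD_sh: "LD m (sh (xi m))"
proof -
  have a: "LD 1 (- (varX + varY + varX * (varY :: int poly poly)))"
    using LD_X LD_Y LD_mult[OF LD_X LD_Y]
    by (intro LD_uminus LD_add) (auto intro: LD_mono)
  have b: "LD (Suc m) ((- (varX + varY + varX * (varY :: int poly poly)))^(Suc m))"
    using LD_pow[OF a, of "Suc m"] by simp
  have c: "LD (Suc m) ((varX + 1)^m * (- (varY :: int poly poly))^(Suc m))"
    using LD_mult[OF LD_0[of "(varX + 1)^m"] LD_pow[OF LD_uminus[OF LD_Y], of "Suc m"]] by simp
  have "LD (Suc m) (- (varX * sh (xi m)))"
    unfolding sh_E by (rule LD_diff[OF b c])
  then have d: "LD (Suc m) (varX * sh (xi m))"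
    using LD_uminus by fastforce
  show ?thesis unfolding LD_def
  proof (intro allI impI)
    fix i j assume nz: "coeff (coeff (sh (xi m)) j) i \<noteq> 0"
    have "coeff (coeff (varX * sh (xi m)) j) (Suc i) \<noteq> 0" using nz coeff_X_mult[of "sh (xi m)" j i] by simp
    then show "m \<le> i + j" using d unfolding LD_def by fastforce
  qed
qed

lemma sh_coeff_m0: "coeff (coeff (sh (xi m)) 0) m = (-1)^m"
proof -
  have A: "coeff (- (varX + varY + varX * varY)) 0 = (- [:0, 1:] :: int poly)"
    by (simp add: varX_def varY_def)
  have B: "coeff (- (varY :: int poly poly)) 0 = 0"
    by (simp add: varY_def)
  have C: "coeff (- (varX * sh (xi m))) 0 = (- [:0,1:])^(Suc m)"
    unfolding sh_E coeff_diff coeff_mult_0 coeff_0_power A B by simp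
  have D: "coeff (coeff (- (varX * sh (xi m))) 0) (Suc m) = - coeff (coeff (sh (xi m)) 0) m"
    by (simp only: coeff_minus coeff_X_mult)
  have E: "coeff ((- [:0,1:] :: int poly)^(Suc m)) (Suc m) = - coeff (coeff (sh (xi m)) 0) m"
    using D unfolding C .
  have M: "(- [:0, 1:] :: int poly) = monom (-1) 1"
    by (simp add: monom_Suc monom_0)
  have F: "coeff ((- [:0,1:] :: int poly)^(Suc m)) (Suc m) = (-1)^(Suc m)"
    unfolding M monom_power coeff_monom by simp
  show ?thesis using E F by simp
qed

lemma vanish_xi: "vanishes_to_order (xi m) 1 1 m"
  unfolding vanishes_to_order_def support2_def
proof (intro conjI)
  show "\<forall>(i, j)\<in>{(i, j). coeff (coeff (sh (xi m)) j) i \<noteq> 0}. m \<le> i + j"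
    using LD_sh[of m] unfolding LD_def by auto
  show "\<exists>(i, j)\<in>{(i, j). coeff (coeff (sh (xi m)) j) i \<noteq> 0}. i + j = m"
    using sh_coeff_m0[of m] by (intro bexI[of _ "(m, 0)"]) auto
qed



lemma tri_mem:
  assumes "2 \<le> m" "j \<le> i" "i < m"
  shows "(real i, real j) \<in> convex hull {(0, 0), (real m - 1, 0), (real m, real m + 1)}"
proof -
  define w where "w = real j / (real m + 1)"
  define v where "v = (real i - w * real m) / (real m - 1)"
  define u where "u = 1 - v - w"
  have m1: "real m - 1 > 0" using assms by simp
  have w0: "0 \<le> w" unfolding w_def by simp
  have wm: "w * real m \<le> real i"
  proof -
    have "w * real m \<le> w * (real m + 1)" using w0 by (simp add: mult_left_mono)
    also have "\<dots> = real j" unfolding w_def by simp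
    finally show ?thesis using assms by simp
  qed
  have v0: "0 \<le> v" unfolding v_def using wm m1 by simp
  have vw: "v * (real m - 1) = real i - w * real m" unfolding v_def using m1 by simp
  have "v + w \<le> 1"
  proof -
    have "(v + w) * (real m - 1) = real i - w" using vw by (simp add: algebra_simps)
    also have "\<dots> \<le> real m - 1" using assms w0 by simp
    finally show ?thesis using m1 by simp
  qed
  then have u0: "0 \<le> u" unfolding u_def by simp
  have e1: "v * (real m - 1) + w * real m = real i" using vw by simp
  have e2: "w * (real m + 1) = real j" unfolding w_def by simp
  show ?thesis unfolding convex_hull_3
    using u0 v0 w0 e1 e2 u_def
    by (intro CollectI exI[of _ u] exI[of _ v] exI[of _ w]) (auto simp: algebra_simps)
qed

lemma support_xi: "support2 (xi m) = {(i, j). j \<le> i \<and> i < m} \<union> {(m, Suc m)}"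
  unfolding support2_def coeff_xi cc_def by auto

lemma newton_xi:
  assumes "1 \<le> m"
  shows "newton_polygon (xi m) = convex hull {(0, 0), (real m - 1, 0), (real m, real m + 1)}"
proof -
  let ?T = "{(0, 0), (real m - 1, 0), (real m, real m + 1)} :: (real \<times> real) set"
  let ?S = "(\<lambda>(i, j). (real i, real j)) ` support2 (xi m)"
  have "?S \<subseteq> convex hull ?T"
  proof
    fix z assume "z \<in> ?S"
    then obtain i j where z: "z = (real i, real j)" "(i, j) \<in> support2 (xi m)" by auto
    show "z \<in> convex hull ?T"
    proof (cases "(i, j) = (m, Suc m)")
      case True then show ?thesis using z by (auto intro: hull_inc)
    next
      case False
      then have ij: "j \<le> i" "i < m" using z support_xi by auto
      show ?thesis
      proof (cases "m = 1")
        case True then show ?thesis using z ij by (auto intro: hull_inc)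
      next
        case False then show ?thesis using z ij assms tri_mem by simp
      qed
    qed
  qed
  then have 1: "convex hull ?S \<subseteq> convex hull ?T"
    by (intro hull_minimal) (auto simp: convex_convex_hull)
  have "?T \<subseteq> ?S"
  proof -
    have "(0, 0) \<in> support2 (xi m)" "(m - 1, 0) \<in> support2 (xi m)" "(m, Suc m) \<in> support2 (xi m)"
      using assms unfolding support_xi by auto
    then show ?thesis using assms by (force simp: of_nat_diff)
  qed
  then have 2: "convex hull ?T \<subseteq> convex hull ?S" by (rule hull_mono)
  show ?thesis unfolding newton_polygon_def using 1 2 by blast
qed



definition wt :: "nat \<Rightarrow> 'k::field poly poly \<Rightarrow> nat \<Rightarrow> int" where
  "wt m p k = int (Suc m) * int (order 0 (coeff p k)) - int m * int k"

lemma ord_dvd: "(p :: 'k::field poly) \<noteq> 0 \<Longrightarrow> monom 1 n dvd p \<longleftrightarrow> n \<le> order 0 p"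
  by (rule monom_1_dvd_iff)

lemma prod_min:
  fixes A B :: "'k::field poly poly"
  assumes nzA: "coeff A ka \<noteq> 0" and nzB: "coeff B kb \<noteq> 0"
    and minA: "\<forall>k. coeff A k \<noteq> 0 \<longrightarrow> wt m A ka \<le> wt m A k"
    and strA: "\<forall>k<ka. coeff A k \<noteq> 0 \<longrightarrow> wt m A ka < wt m A k"
    and minB: "\<forall>k. coeff B k \<noteq> 0 \<longrightarrow> wt m B kb \<le> wt m B k"
    and strB: "\<forall>k<kb. coeff B k \<noteq> 0 \<longrightarrow> wt m B kb < wt m B k"
  shows "coeff (A * B) (ka + kb) \<noteq> 0 \<and> wt m (A * B) (ka + kb) = wt m A ka + wt m B kb"
proof -
  define n where "n = ka + kb"
  define ordab where "ordab = order 0 (coeff A ka) + order 0 (coeff B kb)"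
  define T where "T i = coeff A i * coeff B (n - i)" for i
  have sumT: "coeff (A * B) n = T ka + (\<Sum>i\<in>{..n} - {ka}. T i)"
    unfolding coeff_mult T_def by (subst sum.remove[of _ ka]) (auto simp: n_def)
  have Tka: "T ka \<noteq> 0" "order 0 (T ka) = ordab"
    using nzA nzB by (auto simp: T_def n_def ordab_def order_mult)
  have rest: "monom 1 (Suc ordab) dvd T i" if i: "i \<in> {..n} - {ka}" for i
  proof (cases "T i = 0")
    case True then show ?thesis by simp
  next
    case False
    then have a: "coeff A i \<noteq> 0" and b: "coeff B (n - i) \<noteq> 0" by (auto simp: T_def)
    have ord: "order 0 (T i) = order 0 (coeff A i) + order 0 (coeff B (n - i))"
      using False by (simp add: T_def order_mult)
    have "wt m A ka + wt m B kb < wt m A i + wt m B (n - i)"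
    proof (cases "i < ka")
      case True
      then have "wt m A ka < wt m A i" using strA a by auto
      moreover have "wt m B kb \<le> wt m B (n - i)" using minB b by auto
      ultimately show ?thesis by simp
    next
      case False
      then have "n - i < kb" using i by (auto simp: n_def)
      then have "wt m B kb < wt m B (n - i)" using strB b by auto
      moreover have "wt m A ka \<le> wt m A i" using minA a by auto
      ultimately show ?thesis by simp
    qed
    moreover have "i \<le> n" using i by auto
    ultimately have "int (Suc m) * int ordab < int (Suc m) * int (order 0 (T i))"
      unfolding wt_def ord ordab_def n_def by (simp add: algebra_simps of_nat_diff)
    then have "Suc ordab \<le> order 0 (T i)"
      by (simp only: mult_less_cancel_left_pos of_nat_0_less_iff zero_less_Suc of_nat_less_iff Suc_le_eq)
    then show ?thesis using False ord_dvd by blast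
  qed
  have restsum: "monom 1 (Suc ordab) dvd (\<Sum>i\<in>{..n} - {ka}. T i)"
    using rest by (intro dvd_sum) auto
  have ndvd: "\<not> monom 1 (Suc ordab) dvd T ka" using Tka ord_dvd[OF Tka(1), of "Suc ordab"] by simp
  have c1: "\<not> monom 1 (Suc ordab) dvd coeff (A * B) n"
  proof
    assume "monom 1 (Suc ordab) dvd coeff (A * B) n"
    then have "monom 1 (Suc ordab) dvd coeff (A * B) n - (\<Sum>i\<in>{..n} - {ka}. T i)"
      using restsum by (rule dvd_diff)
    then show False using ndvd sumT by simp
  qed
  then have nz: "coeff (A * B) n \<noteq> 0" by auto
  have "monom 1 ordab dvd monom 1 (Suc ordab)"
    by (simp add: monom_1_dvd_iff')
  then have "monom 1 ordab dvd (\<Sum>i\<in>{..n} - {ka}. T i)" using restsum dvd_trans by blast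
  moreover have "monom 1 ordab dvd T ka" using Tka ord_dvd by auto
  ultimately have "monom 1 ordab dvd coeff (A * B) n" unfolding sumT by (rule dvd_add[rotated])
  then have "ordab \<le> order 0 (coeff (A * B) n)" using nz ord_dvd by blast
  moreover have "\<not> Suc ordab \<le> order 0 (coeff (A * B) n)" using c1 nz ord_dvd by blast
  ultimately have "order 0 (coeff (A * B) n) = ordab" by simp
  then show ?thesis using nz unfolding wt_def n_def ordab_def by (simp add: algebra_simps)
qed

lemma obtain_min:
  fixes A :: "'k::field poly poly"
  assumes "A \<noteq> 0"
  obtains ka where "coeff A ka \<noteq> 0" "\<forall>k. coeff A k \<noteq> 0 \<longrightarrow> wt m A ka \<le> wt m A k"
    "\<forall>k<ka. coeff A k \<noteq> 0 \<longrightarrow> wt m A ka < wt m A k"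
proof -
  define SA where "SA = {k. coeff A k \<noteq> 0}"
  have fin: "finite SA"
    unfolding SA_def by (rule finite_subset[of _ "{..degree A}"]) (auto intro: le_degree)
  have ne: "SA \<noteq> {}" using assms unfolding SA_def by (auto simp: poly_eq_iff)
  define ph where "ph = Min (wt m A ` SA)"
  define M where "M = {k \<in> SA. wt m A k = ph}"
  have finM: "finite M" using fin unfolding M_def by simp
  have "ph \<in> wt m A ` SA" unfolding ph_def using fin ne by (intro Min_in) auto
  then have neM: "M \<noteq> {}" unfolding M_def by auto
  define ka where "ka = Min M"
  have kaM: "ka \<in> M" using Min_in[OF finM neM] unfolding ka_def .
  have le: "ph \<le> wt m A k" if "k \<in> SA" for k
    using fin that unfolding ph_def by simp
  show ?thesis
  proof (rule that)
    show "coeff A ka \<noteq> 0" using kaM unfolding M_def SA_def by auto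
    show "\<forall>k. coeff A k \<noteq> 0 \<longrightarrow> wt m A ka \<le> wt m A k"
      using kaM le unfolding M_def SA_def by auto
    show "\<forall>k<ka. coeff A k \<noteq> 0 \<longrightarrow> wt m A ka < wt m A k"
    proof (intro allI impI)
      fix k assume k: "k < ka" "coeff A k \<noteq> 0"
      have "k \<notin> M" using k(1) Min_le[OF finM] unfolding ka_def by force
      then show "wt m A ka < wt m A k" using k le kaM unfolding M_def SA_def
        by (auto simp: order.strict_iff_order)
    qed
  qed
qed



lemma no_split:
  fixes P A B :: "'k::field poly poly"
  assumes m1: "1 \<le> m" and PAB: "P = A * B" and dP: "degree P = Suc m"
    and oP: "order 0 (coeff P (Suc m)) = m" and c0: "poly (coeff P 0) 0 \<noteq> 0"
    and Pw: "\<forall>j. coeff P j \<noteq> 0 \<longrightarrow> 0 \<le> wt m P j"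
    and dA: "1 \<le> degree A" and dB: "1 \<le> degree B"
  shows False
proof -
  have A0: "A \<noteq> 0" and B0: "B \<noteq> 0" using dA dB by auto
  have dsum: "degree A + degree B = Suc m" using dP PAB degree_mult_eq[OF A0 B0] by simp
  have lead: "coeff P (Suc m) = coeff A (degree A) * coeff B (degree B)"
    using lead_coeff_mult[of A B] PAB dP by simp
  have leadnz: "coeff P (Suc m) \<noteq> 0" using A0 B0 lead by simp
  have olead: "order 0 (coeff A (degree A)) + order 0 (coeff B (degree B)) = m"
  proof -
    have "order 0 (coeff P (Suc m)) = order 0 (coeff A (degree A)) + order 0 (coeff B (degree B))"
      unfolding lead by (rule order_mult) (use leadnz lead in simp)
    then show ?thesis using oP by simp
  qed
  have cP0: "coeff P 0 = coeff A 0 * coeff B 0" using PAB by (simp add: coeff_mult_0)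
  have cP0nz: "coeff P 0 \<noteq> 0" using c0 by auto
  have "order 0 (coeff P 0) = 0" using c0 order_root by blast
  then have o0: "order 0 (coeff A 0) = 0" "order 0 (coeff B 0) = 0"
    using order_mult[of "coeff A 0" "coeff B 0" 0] cP0 cP0nz by auto
  have a0nz: "coeff A 0 \<noteq> 0" and b0nz: "coeff B 0 \<noteq> 0" using cP0 cP0nz by auto
  have wA0: "wt m A 0 = 0" and wB0: "wt m B 0 = 0" using o0 by (simp_all add: wt_def)
  have wsum: "wt m A (degree A) + wt m B (degree B) = 0"
  proof -
    have h1: "int (order 0 (coeff A (degree A))) + int (order 0 (coeff B (degree B))) = int m"
      using olead by simp
    have h2: "int (degree A) + int (degree B) = int (Suc m)" using dsum by simp
    have "wt m A (degree A) + wt m B (degree B) = int (Suc m) * (int (order 0 (coeff A (degree A))) + int (order 0 (coeff B (degree B))))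
        - int m * (int (degree A) + int (degree B))"
      unfolding wt_def by (simp add: algebra_simps)
    also have "\<dots> = 0" unfolding h1 h2 by simp
    finally show ?thesis .
  qed
  have nz_wA: "wt m A (degree A) \<noteq> 0"
  proof
    assume "wt m A (degree A) = 0"
    then have "int (Suc m) * int (order 0 (coeff A (degree A))) = int m * int (degree A)"
      unfolding wt_def by simp
    then have e: "Suc m * order 0 (coeff A (degree A)) = m * degree A"
      by (simp only: of_nat_mult[symmetric] of_nat_eq_iff)
    define oa where "oa = order 0 (coeff A (degree A))"
    have "Suc m * oa + degree A = Suc m * degree A" using e unfolding oa_def by simp
    then have "degree A = Suc m * (degree A - oa)" by (simp add: diff_mult_distrib2)
    then have "Suc m dvd degree A" by (rule dvdI)
    moreover have "degree A < Suc m" using dsum dB by simp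
    ultimately show False using dA by (auto dest: dvd_imp_le)
  qed
  have neg: "wt m A (degree A) < 0 \<or> wt m B (degree B) < 0" using wsum nz_wA by linarith
  obtain ka where ka: "coeff A ka \<noteq> 0" "\<forall>k. coeff A k \<noteq> 0 \<longrightarrow> wt m A ka \<le> wt m A k"
    "\<forall>k<ka. coeff A k \<noteq> 0 \<longrightarrow> wt m A ka < wt m A k" using obtain_min[OF A0] by blast
  obtain kb where kb: "coeff B kb \<noteq> 0" "\<forall>k. coeff B k \<noteq> 0 \<longrightarrow> wt m B kb \<le> wt m B k"
    "\<forall>k<kb. coeff B k \<noteq> 0 \<longrightarrow> wt m B kb < wt m B k" using obtain_min[OF B0] by blast
  have pm: "coeff (A * B) (ka + kb) \<noteq> 0 \<and> wt m (A * B) (ka + kb) = wt m A ka + wt m B kb"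
    by (rule prod_min[OF ka(1) kb(1) ka(2) ka(3) kb(2) kb(3)])
  have "wt m A ka \<le> wt m A 0" "wt m B kb \<le> wt m B 0"
    "wt m A ka \<le> wt m A (degree A)" "wt m B kb \<le> wt m B (degree B)"
    using ka(2) kb(2) a0nz b0nz A0 B0 by auto
  then have "wt m A ka + wt m B kb < 0" using neg wA0 wB0 by linarith
  moreover have "0 \<le> wt m P (ka + kb)" using Pw pm PAB by auto
  ultimately show False using pm PAB by simp
qed

lemma order_monom: "(c :: 'k::field) \<noteq> 0 \<Longrightarrow> order 0 (monom c m) = m"
proof -
  assume c: "c \<noteq> 0"
  have nz: "monom c m \<noteq> 0" using c by simp
  have "monom 1 m dvd monom c m" by (simp add: monom_1_dvd_iff')
  then have "m \<le> order 0 (monom c m)" using ord_dvd[OF nz] by blast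
  moreover have "\<not> monom 1 (Suc m) dvd monom c m" using c by (simp add: monom_1_dvd_iff')
  then have "\<not> Suc m \<le> order 0 (monom c m)" using ord_dvd[OF nz] by blast
  ultimately show ?thesis by simp
qed

lemma irr_gen:
  fixes P :: "'k::field poly poly"
  assumes m1: "1 \<le> m" and dP: "degree P = Suc m"
    and lc: "coeff P (Suc m) = monom c m" and c: "c \<noteq> 0" and c0: "poly (coeff P 0) 0 \<noteq> 0"
    and Pw: "\<forall>j. coeff P j \<noteq> 0 \<longrightarrow> 0 \<le> wt m P j"
  shows "irreducible P"
proof (rule irreducibleI)
  show P0: "P \<noteq> 0" using dP by auto
  show "\<not> is_unit P"
  proof
    assume "is_unit P"
    then have "degree P \<le> degree (1 :: 'k poly poly)"
      by (intro dvd_imp_degree_le) auto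
    then show False using dP by simp
  qed
  have oP: "order 0 (coeff P (Suc m)) = m" using lc c order_monom by simp
  have const: "is_unit a" if Pa: "P = a * b" and da: "degree a = 0" for a b
  proof -
    have a0: "a \<noteq> 0" using Pa P0 by auto
    obtain a0 where aa: "a = [:a0:]" using da by (metis degree_0_id)
    then have cP: "coeff P j = a0 * coeff b j" for j using Pa by simp
    have a0nz: "a0 \<noteq> 0" using a0 aa by simp
    have dv1: "monom c m = a0 * coeff b (Suc m)" using cP[of "Suc m"] lc by simp
    have "poly (coeff P 0) 0 = poly a0 0 * poly (coeff b 0) 0" using cP[of 0] by simp
    then have "poly a0 0 \<noteq> 0" using c0 by auto
    then have oa: "order 0 a0 = 0" using order_root by blast
    have q0: "coeff b (Suc m) \<noteq> 0" using dv1 c by auto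
    have "order 0 (monom c m) = order 0 a0 + order 0 (coeff b (Suc m))"
      unfolding dv1 by (rule order_mult) (use a0nz q0 in simp)
    then have "order 0 (coeff b (Suc m)) = m" using oa order_monom[OF c] by simp
    then have "monom 1 m dvd coeff b (Suc m)" using ord_dvd[OF q0] by simp
    then have "degree (monom (1::'k) m) \<le> degree (coeff b (Suc m))"
      using q0 by (rule dvd_imp_degree_le)
    moreover have "degree (monom c m) = degree a0 + degree (coeff b (Suc m))"
      using dv1 a0nz q0 by (simp add: degree_mult_eq)
    ultimately have "degree a0 = 0" using c by (simp add: degree_monom_eq)
    then have "is_unit a0" using a0nz is_unit_iff_degree by blast
    then show ?thesis unfolding aa by (simp add: is_unit_const_poly_iff)
  qed
  fix a b assume Pab: "P = a * b"
  show "is_unit a \<or> is_unit b"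
  proof (cases "degree a = 0")
    case True then show ?thesis using const Pab by blast
  next
    case False
    show ?thesis
    proof (cases "degree b = 0")
      case True then show ?thesis using const[of b a] Pab by (simp add: mult.commute)
    next
      case False': False
      have False using no_split[OF m1 Pab dP oP c0 Pw] False False' by simp
      then show ?thesis ..
    qed
  qed
qed



lemma coeffP: "coeff (coeff (map_poly (map_poly (of_int :: int \<Rightarrow> 'k::field)) (xi m)) j) i = of_int (cc m i j)"
  by (simp add: coeff_map_poly coeff_xi)

lemma irr_xi:
  assumes m1: "1 \<le> m"
  shows "irreducible (map_poly (map_poly (of_int :: int \<Rightarrow> 'k::field)) (xi m))"
proof -
  define P where "P = map_poly (map_poly (of_int :: int \<Rightarrow> 'k::field)) (xi m)"
  have cP: "coeff (coeff P j) i = of_int (cc m i j)" for i j unfolding P_def by (rule coeffP)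
  have lc: "coeff P (Suc m) = monom ((-1)^m) m"
    by (rule poly_eqI) (simp add: cP coeff_monom cc_def)
  have z: "coeff P j = 0" if "j > Suc m" for j
    by (rule poly_eqI) (use that in \<open>auto simp: cP cc_def\<close>)
  have dP: "degree P = Suc m"
  proof (rule antisym)
    show "degree P \<le> Suc m" by (rule degree_le) (use z in auto)
    show "Suc m \<le> degree P" by (rule le_degree) (simp add: lc)
  qed
  have c0: "poly (coeff P 0) 0 \<noteq> 0"
    using m1 by (simp add: poly_0_coeff_0 cP cc_def)
  have Pw: "\<forall>j. coeff P j \<noteq> 0 \<longrightarrow> 0 \<le> wt m P j"
  proof (intro allI impI)
    fix j assume nz: "coeff P j \<noteq> 0"
    then have jle: "j \<le> Suc m" using z by (meson not_le)
    have "monom 1 (min j m) dvd coeff P j"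
      unfolding monom_1_dvd_iff' by (auto simp: cP cc_def)
    then have o: "min j m \<le> order 0 (coeff P j)" using ord_dvd[OF nz] by blast
    have "int m * int j \<le> int (Suc m) * int (min j m)"
    proof (cases "j \<le> m")
      case True then show ?thesis by (simp add: min_def mult_right_mono)
    next
      case False then have "j = Suc m" using jle by simp
      then show ?thesis by (simp add: algebra_simps)
    qed
    also have "\<dots> \<le> int (Suc m) * int (order 0 (coeff P j))"
      using o by (intro mult_left_mono) auto
    finally show "0 \<le> wt m P j" unfolding wt_def by simp
  qed
  show ?thesis unfolding P_def[symmetric]
    by (rule irr_gen[OF m1 dP lc _ c0 Pw]) simp
qed

lemma rec_b_gen: fixes X Y :: "'a::comm_ring_1"
  shows "(1 - X*Y) * ((1 - X*Y)^(Suc m) - X^m*(1-Y)^(Suc m)) + (1-X) * (X^m * (1-Y)^(Suc m))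
     = (1 - X*Y)^(Suc (Suc m)) - X^(Suc m)*(1-Y)^(Suc (Suc m))"
proof -
  define Q where "Q = X^m * (1-Y)^(Suc m)"
  have a: "X^(Suc m)*(1-Y)^(Suc (Suc m)) = X * (1 - Y) * Q" unfolding Q_def by (simp add: algebra_simps)
  have b: "(1 - X*Y)^(Suc (Suc m)) = (1 - X*Y) * (1 - X*Y)^(Suc m)" by simp
  show ?thesis unfolding a b Q_def[symmetric] by (simp add: algebra_simps)
qed

lemma rec_c_gen: fixes X Y :: "'a::comm_ring_1"
  shows "X * (1-Y) * ((1 - X*Y)^(Suc m) - X^m*(1-Y)^(Suc m)) + (1-X) * (1 - X*Y)^(Suc m)
     = (1 - X*Y)^(Suc (Suc m)) - X^(Suc m)*(1-Y)^(Suc (Suc m))"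
proof -
  define Q where "Q = X^m * (1-Y)^(Suc m)"
  define F where "F = (1 - X*Y)^(Suc m)"
  have a: "X^(Suc m)*(1-Y)^(Suc (Suc m)) = X * (1 - Y) * Q" unfolding Q_def by (simp add: algebra_simps)
  have b: "(1 - X*Y)^(Suc (Suc m)) = (1 - X*Y) * F" unfolding F_def by simp
  show ?thesis unfolding a b Q_def[symmetric] F_def[symmetric] by (simp add: algebra_simps)
qed

lemma oneX_nz: "(1 - varX :: int poly poly) \<noteq> 0"
proof
  assume "(1 - varX :: int poly poly) = 0"
  then have "coeff (coeff (1 - varX :: int poly poly) 0) 0 = 0" by simp
  then show False by (simp add: varX_def)
qed

lemma cancelX: "(1 - varX) * a = (1 - varX) * (b :: int poly poly) \<Longrightarrow> a = b"
  using oneX_nz by simp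

theorem proposition3p1:
  fixes f g h :: "int poly poly"
  defines "f \<equiv> 1 - varX * varY"
      and "g \<equiv> 1 - varX * varY ^ 2"
      and "h \<equiv> 1 - varY"
  shows "\<exists>\<xi> :: nat \<Rightarrow> int poly poly.
           \<xi> 1 = g \<and>
           (\<forall>m\<ge>1. \<xi> (m + 1) = f * \<xi> m + varX ^ m * h ^ (m + 1)) \<and>
           (\<forall>m\<ge>1. \<xi> (m + 1) = varX * h * \<xi> m + f ^ (m + 1)) \<and>
           (\<forall>m\<ge>1. vanishes_to_order (\<xi> m) 1 1 m) \<and>
           (\<forall>m\<ge>1. newton_polygon (\<xi> m) =
               convex hull {(0, 0), (real m - 1, 0), (real m, real m + 1)}) \<and>
           (\<forall>m\<ge>1. irreducible (map_poly (map_poly (of_int :: int \<Rightarrow> 'k::field)) (\<xi> m)))"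
proof (intro exI[of _ xi] conjI allI impI)
  show "xi 1 = g"
  proof (rule cancelX)
    have "(1 - varX) * g = (1 - varX * varY)^(Suc 1) - varX^1*(1-varY)^(Suc 1)"
      unfolding g_def by (simp add: algebra_simps power2_eq_square)
    then show "(1 - varX) * xi 1 = (1 - varX) * g" using E_xi[of 1] by simp
  qed
  fix m :: nat assume m1: "1 \<le> m"
  show "xi (m + 1) = f * xi m + varX ^ m * h ^ (m + 1)"
  proof (rule cancelX)
    have "(1 - varX) * (f * xi m + varX ^ m * h ^ (m + 1))
        = f * ((1 - varX) * xi m) + (1 - varX) * (varX ^ m * h ^ Suc m)"
      by (simp add: algebra_simps)
    also have "\<dots> = (1 - varX) * xi (m + 1)"
      unfolding E_xi f_def h_def using E_xi[of "Suc m"] rec_b_gen[of varX varY m] by simp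
    finally show "(1 - varX) * xi (m + 1) = (1 - varX) * (f * xi m + varX ^ m * h ^ (m + 1))" ..
  qed
  show "xi (m + 1) = varX * h * xi m + f ^ (m + 1)"
  proof (rule cancelX)
    have "(1 - varX) * (varX * h * xi m + f ^ (m + 1))
        = varX * h * ((1 - varX) * xi m) + (1 - varX) * f ^ Suc m"
      by (simp add: algebra_simps)
    also have "\<dots> = (1 - varX) * xi (m + 1)"
      unfolding E_xi f_def h_def using E_xi[of "Suc m"] rec_c_gen[of varX varY m] by simp
    finally show "(1 - varX) * xi (m + 1) = (1 - varX) * (varX * h * xi m + f ^ (m + 1))" ..
  qed
  show "vanishes_to_order (xi m) 1 1 m" by (rule vanish_xi)
  show "newton_polygon (xi m) = convex hull {(0, 0), (real m - 1, 0), (real m, real m + 1)}"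
    using m1 by (rule newton_xi)
  show "irreducible (map_poly (map_poly (of_int :: int \<Rightarrow> 'k::field)) (xi m))"
    using m1 by (rule irr_xi)
qed

end
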